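(* Let $p$ be an odd prime, $r\ge3$ with $p\nmid r$, $D=\mathrm{D}_{2r}$, and let $G=V\rtimes_\psi D$ with $V=\mathbb{Z}_p^d$ and $\psi:D\to\mathrm{GL}(V)$ irreducible and non-trivial. Let $A=\mathrm{Aut}(G)$. Then $A=\mathrm{Inn}_G(V)\rtimes\mathrm{N}_A(D)$, and $\mathrm{Inn}_G(V)\cong V$.
   Context: $\mathrm{D}_{2r}$ is the dihedral group of order $2r$; $V\rtimes_\psi D$ is the semidirect product where $D$ acts on $V=\mathbb{F}_p^d$ via the representation $\psi$ over $\mathbb{F}_p$. For $g\in G$, $\tilde g$ is the inner automorphism $h\mapsto ghg^{-1}$, and for $H\le G$, $\mathrm{Inn}_G(H)=\{\tilde h: h\in H\}\le\mathrm{Aut}(G)$. $\mathrm{N}_A(D)=\{f\in A: f(D)=D\}$. *)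

theory Defs
  imports "HOL-Algebra.Bij" "HOL-Algebra.Coset" "HOL-Computational_Algebra.Primes"
begin

definition Zp_vec :: "nat \<Rightarrow> nat \<Rightarrow> (nat \<Rightarrow> int) monoid" where
  "Zp_vec p d = \<lparr>carrier = {v. (\<forall>i<d. 0 \<le> v i \<and> v i < int p) \<and> (\<forall>i\<ge>d. v i = 0)},
                 monoid.mult = (\<lambda>v w i. (v i + w i) mod int p),
                 monoid.one = (\<lambda>i. 0)\<rparr>"

text \<open>The dihedral group of order 2r: (a, s) stands for rho^a sigma^s, where rho is a
  rotation of order r, sigma a reflection, and sigma rho = rho^(-1) sigma.\<close>
definition dihedral_group :: "nat \<Rightarrow> (int \<times> bool) monoid" where
  "dihedral_group r = \<lparr>carrier = {0..<int r} \<times> UNIV,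
     monoid.mult = (\<lambda>(a, s) (b, t). ((a + (if s then - b else b)) mod int r, s \<noteq> t)),
     monoid.one = (0, False)\<rparr>"

definition semidirect ::
  "('v, 'x) monoid_scheme \<Rightarrow> ('d, 'y) monoid_scheme \<Rightarrow> ('d \<Rightarrow> 'v \<Rightarrow> 'v) \<Rightarrow> ('v \<times> 'd) monoid" where
  "semidirect V D \<psi> = \<lparr>carrier = carrier V \<times> carrier D,
     monoid.mult = (\<lambda>(v, g) (w, h). (v \<otimes>\<^bsub>V\<^esub> \<psi> g w, g \<otimes>\<^bsub>D\<^esub> h)),
     monoid.one = (\<one>\<^bsub>V\<^esub>, \<one>\<^bsub>D\<^esub>)\<rparr>"

text \<open>psi is an irreducible representation of D on the F_p-space V (for an elementary
  abelian p-group, F_p-subspaces are exactly the subgroups).\<close>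
definition irreducible_rep :: "('d, 'y) monoid_scheme \<Rightarrow> ('v, 'x) monoid_scheme \<Rightarrow> ('d \<Rightarrow> 'v \<Rightarrow> 'v) \<Rightarrow> bool" where
  "irreducible_rep D V \<psi> \<longleftrightarrow> carrier V \<noteq> {\<one>\<^bsub>V\<^esub>} \<and>
     (\<forall>W. subgroup W V \<and> (\<forall>g\<in>carrier D. \<psi> g ` W \<subseteq> W) \<longrightarrow> W = {\<one>\<^bsub>V\<^esub>} \<or> W = carrier V)"

definition nontrivial_rep :: "('d, 'y) monoid_scheme \<Rightarrow> ('v, 'x) monoid_scheme \<Rightarrow> ('d \<Rightarrow> 'v \<Rightarrow> 'v) \<Rightarrow> bool" where
  "nontrivial_rep D V \<psi> \<longleftrightarrow> (\<exists>g\<in>carrier D. \<psi> g \<noteq> \<one>\<^bsub>AutoGroup V\<^esub>)"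

definition inner_aut :: "('a, 'b) monoid_scheme \<Rightarrow> 'a \<Rightarrow> 'a \<Rightarrow> 'a" where
  "inner_aut G g = (\<lambda>h\<in>carrier G. g \<otimes>\<^bsub>G\<^esub> h \<otimes>\<^bsub>G\<^esub> inv\<^bsub>G\<^esub> g)"

definition Inn_of :: "('a, 'b) monoid_scheme \<Rightarrow> 'a set \<Rightarrow> ('a \<Rightarrow> 'a) set" where
  "Inn_of G H = inner_aut G ` H"

definition aut_normalizer :: "('a, 'b) monoid_scheme \<Rightarrow> 'a set \<Rightarrow> ('a \<Rightarrow> 'a) set" where
  "aut_normalizer G H = {f \<in> auto G. f ` H = H}"

definition internal_semidirect :: "('a, 'b) monoid_scheme \<Rightarrow> 'a set \<Rightarrow> 'a set \<Rightarrow> bool" where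
  "internal_semidirect A N H \<longleftrightarrow> N \<lhd> A \<and> subgroup H A \<and> N \<inter> H = {\<one>\<^bsub>A\<^esub>} \<and> N <#>\<^bsub>A\<^esub> H = carrier A"

end

theory Submission
  imports Defs "HOL-Algebra.Multiplicative_Group"
begin


locale sdp = group G for G (structure) +
  fixes V H and p :: nat
  assumes finH: "finite H"
  and Vn: "V \<lhd> G"
  and Vc: "\<And>x y. x \<in> V \<Longrightarrow> y \<in> V \<Longrightarrow> x \<otimes> y = y \<otimes> x"
  and Vp: "\<And>x. x \<in> V \<Longrightarrow> x [^] p = \<one>"
  and Hs: "subgroup H G"
  and VH: "V \<inter> H = {\<one>}"
  and VHG: "V <#> H = carrier G"
  and cop: "coprime p (card H)"
  and cent: "\<And>v. v \<in> V \<Longrightarrow> (\<And>h. h \<in> H \<Longrightarrow> v \<otimes> h = h \<otimes> v) \<Longrightarrow> v = \<one>"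
begin

lemma Vs: "subgroup V G" using Vn by (rule normal_imp_subgroup)
lemma VG: "x \<in> V \<Longrightarrow> x \<in> carrier G" by (rule subgroup.mem_carrier[OF Vs])
lemma HG: "x \<in> H \<Longrightarrow> x \<in> carrier G" by (rule subgroup.mem_carrier[OF Hs])
lemma Vm: "x \<in> V \<Longrightarrow> y \<in> V \<Longrightarrow> x \<otimes> y \<in> V" by (rule subgroup.m_closed[OF Vs])
lemma Hm: "x \<in> H \<Longrightarrow> y \<in> H \<Longrightarrow> x \<otimes> y \<in> H" by (rule subgroup.m_closed[OF Hs])
lemma Vi: "x \<in> V \<Longrightarrow> inv x \<in> V" by (rule subgroup.m_inv_closed[OF Vs])
lemma Hi: "x \<in> H \<Longrightarrow> inv x \<in> H" by (rule subgroup.m_inv_closed[OF Hs])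
lemma V1: "\<one> \<in> V" by (rule subgroup.one_closed[OF Vs])
lemma H1: "\<one> \<in> H" by (rule subgroup.one_closed[OF Hs])
lemma Vconj: "g \<in> carrier G \<Longrightarrow> x \<in> V \<Longrightarrow> g \<otimes> x \<otimes> inv g \<in> V"
  by (rule normal.inv_op_closed2[OF Vn])

lemma inv_cancel1 [simp]: "a \<in> carrier G \<Longrightarrow> b \<in> carrier G \<Longrightarrow> inv a \<otimes> (a \<otimes> b) = b"
  by (simp add: m_assoc[symmetric])
lemma inv_cancel2 [simp]: "a \<in> carrier G \<Longrightarrow> b \<in> carrier G \<Longrightarrow> a \<otimes> (inv a \<otimes> b) = b"
  by (simp add: m_assoc[symmetric])

lemma decomp_ex: "x \<in> carrier G \<Longrightarrow> \<exists>v h. v \<in> V \<and> h \<in> H \<and> x = v \<otimes> h"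
proof -
  assume "x \<in> carrier G"
  then have "x \<in> V <#> H" using VHG by simp
  then show ?thesis unfolding set_mult_def by blast
qed

lemma decomp_uniq:
  assumes "v \<in> V" "h \<in> H" "w \<in> V" "k \<in> H" "v \<otimes> h = w \<otimes> k"
  shows "v = w \<and> h = k"
proof -
  have c: "v \<in> carrier G" "h \<in> carrier G" "w \<in> carrier G" "k \<in> carrier G"
    using assms VG HG by auto
  have "inv w \<otimes> v = inv w \<otimes> (v \<otimes> h) \<otimes> inv h" using c by (simp add: m_assoc)
  also have "\<dots> = inv w \<otimes> (w \<otimes> k) \<otimes> inv h" using assms(5) by simp
  also have "\<dots> = k \<otimes> inv h" using c by (simp add: m_assoc[symmetric])
  finally have e: "inv w \<otimes> v = k \<otimes> inv h" .
  moreover have "inv w \<otimes> v \<in> V" using assms by (simp add: Vi Vm)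
  moreover have "k \<otimes> inv h \<in> H" using assms by (simp add: Hi Hm)
  ultimately have "inv w \<otimes> v = \<one>" using VH by auto
  then have "inv v = inv w" using c by (intro inv_equality) auto
  then have vw: "v = w" using c by (metis inv_inv)
  then have "v \<otimes> h = v \<otimes> k" using assms(5) by simp
  then have "h = k" using c by simp
  with vw show ?thesis by simp
qed
definition cV where "cV x = (THE v. v \<in> V \<and> (\<exists>h\<in>H. x = v \<otimes> h))"
definition pH where "pH x = (THE h. h \<in> H \<and> (\<exists>v\<in>V. x = v \<otimes> h))"

lemma cpH:
  assumes "x \<in> carrier G"
  shows "cV x \<in> V" "pH x \<in> H" "x = cV x \<otimes> pH x"
proof -
  obtain v h where vh: "v \<in> V" "h \<in> H" "x = v \<otimes> h" using decomp_ex assms by blast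
  have 1: "cV x = v" unfolding cV_def
    by (rule the_equality) (use vh decomp_uniq in auto)
  have 2: "pH x = h" unfolding pH_def
    by (rule the_equality) (use vh decomp_uniq in auto)
  show "cV x \<in> V" "pH x \<in> H" "x = cV x \<otimes> pH x" using 1 2 vh by auto
qed

lemma cpH_uniq:
  assumes "v \<in> V" "h \<in> H" "x = v \<otimes> h"
  shows "cV x = v" "pH x = h"
proof -
  have x: "x \<in> carrier G" using assms VG HG by auto
  show "cV x = v" "pH x = h" using decomp_uniq[OF cpH(1,2)[OF x] assms(1,2)] cpH(3)[OF x] assms(3) by auto
qed

lemma cpH_mult:
  assumes x: "x \<in> carrier G" and y: "y \<in> carrier G"
  shows "cV (x \<otimes> y) = cV x \<otimes> (pH x \<otimes> cV y \<otimes> inv (pH x))"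
        "pH (x \<otimes> y) = pH x \<otimes> pH y"
proof -
  note X = cpH[OF x] and Y = cpH[OF y]
  have g: "cV x \<in> carrier G" "pH x \<in> carrier G" "cV y \<in> carrier G" "pH y \<in> carrier G"
    using X Y VG HG by auto
  have "(cV x \<otimes> pH x) \<otimes> (cV y \<otimes> pH y) = (cV x \<otimes> (pH x \<otimes> cV y \<otimes> inv (pH x))) \<otimes> (pH x \<otimes> pH y)"
    using g by (simp add: m_assoc)
  then have "x \<otimes> y = (cV x \<otimes> (pH x \<otimes> cV y \<otimes> inv (pH x))) \<otimes> (pH x \<otimes> pH y)"
    using X(3) Y(3) by simp
  moreover have "cV x \<otimes> (pH x \<otimes> cV y \<otimes> inv (pH x)) \<in> V"
    using X Y g by (simp add: Vconj Vm)
  moreover have "pH x \<otimes> pH y \<in> H" using X Y by (simp add: Hm)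
  ultimately show "cV (x \<otimes> y) = cV x \<otimes> (pH x \<otimes> cV y \<otimes> inv (pH x))"
        "pH (x \<otimes> y) = pH x \<otimes> pH y" using cpH_uniq by blast+
qed

lemma pH_one: "pH \<one> = \<one>" using cpH_uniq[OF V1 H1] by simp

lemma pH_pow: "x \<in> carrier G \<Longrightarrow> pH (x [^] (n::nat)) = pH x [^] n"
  by (induction n) (simp_all add: pH_one cpH_mult(2))

lemma Hpow_card: "h \<in> H \<Longrightarrow> h [^] card H = \<one>"
proof -
  assume h: "h \<in> H"
  interpret Hg: group "G\<lparr>carrier := H\<rparr>" using Hs subgroup.subgroup_is_group is_group by blast
  have "h [^]\<^bsub>G\<lparr>carrier := H\<rparr>\<^esub> order (G\<lparr>carrier := H\<rparr>) = \<one>\<^bsub>G\<lparr>carrier := H\<rparr>\<^esub>"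
    by (rule Hg.pow_order_eq_1) (simp add: h)
  then show ?thesis using nat_pow_consistent[of h "card H" H] by (simp add: order_def)
qed


lemma pow_p_V:
  assumes x: "x \<in> carrier G" and xp: "x [^] p = \<one>"
  shows "x \<in> V"
proof -
  have h: "pH x \<in> H" "pH x \<in> carrier G" using cpH[OF x] HG by auto
  have "pH x [^] p = \<one>" using pH_pow[OF x, of p] xp pH_one by simp
  then have d1: "ord (pH x) dvd p" using pow_eq_id h(2) by blast
  have "pH x [^] card H = \<one>" using Hpow_card h(1) by blast
  then have d2: "ord (pH x) dvd card H" using pow_eq_id h(2) by blast
  have "ord (pH x) dvd gcd p (card H)" using d1 d2 by simp
  then have "ord (pH x) = 1" using cop by simp
  then have "pH x = \<one>" using ord_eq_1 h(2) by blast
  then have "x = cV x" using cpH[OF x] VG by simp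
  then show ?thesis using cpH(1)[OF x] by simp
qed

lemma A_carrier: "carrier (AutoGroup G) = auto G"
  by (simp add: AutoGroup_def)
lemma A_mult: "f \<in> auto G \<Longrightarrow> g \<in> auto G \<Longrightarrow> f \<otimes>\<^bsub>AutoGroup G\<^esub> g = compose (carrier G) f g"
  by (simp add: AutoGroup_def BijGroup_def auto_def)
lemma A_one: "\<one>\<^bsub>AutoGroup G\<^esub> = (\<lambda>x\<in>carrier G. x)"
  by (simp add: AutoGroup_def BijGroup_def)
lemma Ag: "group (AutoGroup G)" by (rule AutoGroup)

lemma auto_hom: "f \<in> auto G \<Longrightarrow> f \<in> hom G G" by (simp add: auto_def)
lemma auto_Bij: "f \<in> auto G \<Longrightarrow> f \<in> Bij (carrier G)" by (simp add: auto_def)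
lemma auto_carrier: "f \<in> auto G \<Longrightarrow> x \<in> carrier G \<Longrightarrow> f x \<in> carrier G"
  by (rule hom_in_carrier[OF auto_hom])
lemma auto_inj: "f \<in> auto G \<Longrightarrow> inj_on f (carrier G)"
  using auto_Bij[of f] unfolding Bij_def bij_betw_def by simp

lemma auto_V: assumes f: "f \<in> auto G" and x: "x \<in> V" shows "f x \<in> V"
proof -
  have xc: "x \<in> carrier G" using x VG by simp
  have "f (x [^] p) = f x [^] p" using hom_nat_pow[OF auto_hom[OF f] xc is_group is_group] .
  moreover have "f \<one> = \<one>" using hom_one[OF auto_hom[OF f] is_group is_group] .
  ultimately have "f x [^] p = \<one>" using Vp[OF x] by simp
  then show ?thesis by (rule pow_p_V[OF auto_carrier[OF f xc]])
qed

lemma inn_apply: "x \<in> carrier G \<Longrightarrow> inner_aut G g x = g \<otimes> x \<otimes> inv g"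
  by (simp add: inner_aut_def)

lemma inn_auto: assumes g: "g \<in> carrier G" shows "inner_aut G g \<in> auto G"
proof -
  have "inner_aut G g \<in> hom G G"
    unfolding hom_def using g by (auto simp: inn_apply m_assoc)
  moreover have "inner_aut G g \<in> extensional (carrier G)"
    unfolding inner_aut_def by simp
  moreover have "bij_betw (inner_aut G g) (carrier G) (carrier G)"
    by (rule bij_betw_byWitness[where f'="inner_aut G (inv g)"]) (auto simp: inn_apply g m_assoc)
  ultimately show ?thesis unfolding auto_def Bij_def by simp
qed

lemma inn_mult: "g \<in> carrier G \<Longrightarrow> h \<in> carrier G \<Longrightarrow>
   compose (carrier G) (inner_aut G g) (inner_aut G h) = inner_aut G (g \<otimes> h)"
  by (rule ext) (auto simp: compose_def inner_aut_def m_assoc inv_mult_group)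

lemma inn_one: "inner_aut G \<one> = (\<lambda>x\<in>carrier G. x)"
  by (rule ext) (auto simp: inner_aut_def)

lemma auto_conj: "f \<in> auto G \<Longrightarrow> g \<in> carrier G \<Longrightarrow>
   compose (carrier G) f (inner_aut G g) = compose (carrier G) (inner_aut G (f g)) f"
proof (rule ext)
  fix x assume f: "f \<in> auto G" and g: "g \<in> carrier G"
  show "compose (carrier G) f (inner_aut G g) x = compose (carrier G) (inner_aut G (f g)) f x"
  proof (cases "x \<in> carrier G")
    case True
    have h: "f \<in> hom G G" using f auto_hom by blast
    have "f (g \<otimes> x \<otimes> inv g) = f g \<otimes> f x \<otimes> inv (f g)"
    proof -
      have gh: "group_hom G G f" unfolding group_hom_def group_hom_axioms_def using is_group h by simp
      have "f (inv g) = inv (f g)" using group_hom.hom_inv[OF gh g] by simp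
      then show ?thesis using h g True by (simp add: hom_mult)
    qed
    then show ?thesis using True g auto_carrier[OF f] by (simp add: compose_def inn_apply)
  qed (simp add: compose_def)
qed

lemma Vg_comm: "comm_group (G\<lparr>carrier := V\<rparr>)"
proof -
  interpret Vg: group "G\<lparr>carrier := V\<rparr>" using subgroup.subgroup_is_group[OF Vs is_group] .
  show ?thesis by (rule Vg.group_comm_groupI) (simp add: Vc)
qed

lemma finprod_conj:
  assumes A: "finite A" and g: "g \<in> carrier G" and F: "F \<in> A \<rightarrow> V"
  shows "finprod (G\<lparr>carrier := V\<rparr>) (\<lambda>k. g \<otimes> F k \<otimes> inv g) A
       = g \<otimes> finprod (G\<lparr>carrier := V\<rparr>) F A \<otimes> inv g"
  using A F
proof (induction A rule: finite_induct)
  case empty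
  interpret Vg: comm_group "G\<lparr>carrier := V\<rparr>" by (rule Vg_comm)
  show ?case using g by simp
next
  case (insert a A)
  interpret Vg: comm_group "G\<lparr>carrier := V\<rparr>" by (rule Vg_comm)
  have FA: "F \<in> A \<rightarrow> V" and Fa: "F a \<in> V" using insert.prems by auto
  have cA: "(\<lambda>k. g \<otimes> F k \<otimes> inv g) \<in> A \<rightarrow> V" using FA g Vconj by auto
  have ca: "g \<otimes> F a \<otimes> inv g \<in> V" using Fa g Vconj by auto
  have P: "finprod (G\<lparr>carrier := V\<rparr>) F A \<in> V"
    using Vg.finprod_closed[of F A] FA by simp
  have "finprod (G\<lparr>carrier := V\<rparr>) (\<lambda>k. g \<otimes> F k \<otimes> inv g) (insert a A)
      = (g \<otimes> F a \<otimes> inv g) \<otimes> finprod (G\<lparr>carrier := V\<rparr>) (\<lambda>k. g \<otimes> F k \<otimes> inv g) A"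
    using Vg.finprod_insert[of A a "\<lambda>k. g \<otimes> F k \<otimes> inv g"] insert.hyps cA ca by simp
  also have "\<dots> = (g \<otimes> F a \<otimes> inv g) \<otimes> (g \<otimes> finprod (G\<lparr>carrier := V\<rparr>) F A \<otimes> inv g)"
    using insert.IH FA by simp
  also have "\<dots> = g \<otimes> (F a \<otimes> finprod (G\<lparr>carrier := V\<rparr>) F A) \<otimes> inv g"
    using g Fa P VG by (simp add: m_assoc)
  also have "\<dots> = g \<otimes> finprod (G\<lparr>carrier := V\<rparr>) F (insert a A) \<otimes> inv g"
    using Vg.finprod_insert[of A a F] insert.hyps FA Fa by simp
  finally show ?case .
qed

lemma conj_pow: "g \<in> carrier G \<Longrightarrow> s \<in> carrier G \<Longrightarrow> (g \<otimes> s \<otimes> inv g) [^] (n::nat) = g \<otimes> s [^] n \<otimes> inv g"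
  by (induction n) (simp_all add: m_assoc)

lemma cocycle_conj:
  assumes f: "f \<in> auto G"
  shows "\<exists>u\<in>V. \<forall>h\<in>H. inv u \<otimes> f h \<otimes> u \<in> H"
proof -
  interpret Vg: comm_group "G\<lparr>carrier := V\<rparr>" by (rule Vg_comm)
  define c where "c h = cV (f h)" for h
  define \<phi> where "\<phi> h = pH (f h)" for h
  have fh: "h \<in> H \<Longrightarrow> f h \<in> carrier G" for h using auto_carrier[OF f HG] by simp
  have cV': "h \<in> H \<Longrightarrow> c h \<in> V" for h using cpH(1)[OF fh] c_def by simp
  have pH': "h \<in> H \<Longrightarrow> \<phi> h \<in> H" for h using cpH(2)[OF fh] \<phi>_def by simp
  have fdec: "h \<in> H \<Longrightarrow> f h = c h \<otimes> \<phi> h" for h using cpH(3)[OF fh] c_def \<phi>_def by simp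
  have coc: "c (h \<otimes> k) = c h \<otimes> (\<phi> h \<otimes> c k \<otimes> inv (\<phi> h))" if "h \<in> H" "k \<in> H" for h k
  proof -
    have "f (h \<otimes> k) = f h \<otimes> f k" using hom_mult[OF auto_hom[OF f] HG HG] that by simp
    then show ?thesis using cpH_mult(1)[OF fh fh, of h k] that c_def \<phi>_def by simp
  qed
  have cfun: "c \<in> H \<rightarrow> V" using cV' by auto
  define S where "S = finprod (G\<lparr>carrier := V\<rparr>) c H"
  have SV: "S \<in> V" unfolding S_def using Vg.finprod_closed[of c H] cfun by simp
  define n where "n = card H"
  have n0: "n \<noteq> 0" unfolding n_def using finH H1 by auto
  obtain x y where xy: "n * x = p * y + gcd n p" using bezout_nat[OF n0] by blast
  have g1: "gcd n p = 1" using cop unfolding n_def by (simp add: coprime_iff_gcd_eq_1 gcd.commute)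
  define u where "u = S [^] x"
  have uV: "u \<in> V" unfolding u_def using SV Vg.nat_pow_closed[of S x] nat_pow_consistent[of S x V] by simp
  have key: "u = c h \<otimes> (\<phi> h \<otimes> u \<otimes> inv (\<phi> h))" if h: "h \<in> H" for h
  proof -
    have img: "(\<lambda>k. h \<otimes> k) ` H = H"
    proof
      show "(\<lambda>k. h \<otimes> k) ` H \<subseteq> H" using h Hm by auto
      show "H \<subseteq> (\<lambda>k. h \<otimes> k) ` H"
      proof
        fix k assume k: "k \<in> H"
        have "k = h \<otimes> (inv h \<otimes> k)" using h k HG by simp
        moreover have "inv h \<otimes> k \<in> H" using h k Hi Hm by simp
        ultimately show "k \<in> (\<lambda>k. h \<otimes> k) ` H" by (rule image_eqI)
      qed
    qed
    have inj: "inj_on (\<lambda>k. h \<otimes> k) H" using h HG by (auto simp: inj_on_def)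
    have "S = finprod (G\<lparr>carrier := V\<rparr>) c ((\<lambda>k. h \<otimes> k) ` H)" unfolding S_def using img by simp
    also have "\<dots> = finprod (G\<lparr>carrier := V\<rparr>) (\<lambda>k. c (h \<otimes> k)) H"
      using Vg.finprod_reindex[of c "\<lambda>k. h \<otimes> k" H] inj img cfun by simp
    also have "\<dots> = finprod (G\<lparr>carrier := V\<rparr>) (\<lambda>k. c h \<otimes>\<^bsub>G\<lparr>carrier := V\<rparr>\<^esub> (\<phi> h \<otimes> c k \<otimes> inv (\<phi> h))) H"
      by (rule Vg.finprod_cong') (use h coc cV' pH' HG Vconj Vm in auto)
    also have "\<dots> = finprod (G\<lparr>carrier := V\<rparr>) (\<lambda>k. c h) H \<otimes> finprod (G\<lparr>carrier := V\<rparr>) (\<lambda>k. \<phi> h \<otimes> c k \<otimes> inv (\<phi> h)) H"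
      by (subst Vg.finprod_multf) (use h coc cV' pH' HG Vconj in auto)
    also have "\<dots> = c h [^] n \<otimes> (\<phi> h \<otimes> S \<otimes> inv (\<phi> h))"
      using Vg.finprod_const[of "c h" H] cV'[OF h] finprod_conj[OF finH HG[OF pH'[OF h]] cfun]
        nat_pow_consistent[of "c h" "card H" V] unfolding n_def S_def by simp
    finally have S1: "S = c h [^] n \<otimes> (\<phi> h \<otimes> S \<otimes> inv (\<phi> h))" .
    have ch: "c h \<in> carrier G" "c h \<in> V" using cV'[OF h] VG by auto
    have ph: "\<phi> h \<in> carrier G" using pH'[OF h] HG by simp
    have Sc: "S \<in> carrier G" using SV VG by simp
    have chn: "c h [^] n \<in> V" using ch Vg.nat_pow_closed[of "c h" n] nat_pow_consistent[of "c h" n V] by simp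
    have cj: "\<phi> h \<otimes> S \<otimes> inv (\<phi> h) \<in> V" using Vconj ph SV by simp
    have "u = (c h [^] n \<otimes> (\<phi> h \<otimes> S \<otimes> inv (\<phi> h))) [^] x" unfolding u_def using S1 by simp
    also have "\<dots> = (c h [^] n) [^] x \<otimes> (\<phi> h \<otimes> S \<otimes> inv (\<phi> h)) [^] x"
      by (rule pow_mult_distrib) (use Vc chn cj VG in auto)
    also have "(c h [^] n) [^] x = c h"
    proof -
      have "(c h [^] n) [^] x = c h [^] (p * y + 1)" using xy g1 ch by (simp add: nat_pow_pow)
      also have "\<dots> = (c h [^] p) [^] y \<otimes> c h" using ch
        by (simp add: nat_pow_pow[symmetric] nat_pow_mult[symmetric] mult.commute)
      also have "\<dots> = c h" using Vp[OF ch(2)] ch by simp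
      finally show ?thesis .
    qed
    also have "(\<phi> h \<otimes> S \<otimes> inv (\<phi> h)) [^] x = \<phi> h \<otimes> u \<otimes> inv (\<phi> h)"
      unfolding u_def using conj_pow[OF ph Sc] by simp
    finally show ?thesis .
  qed
  have "inv u \<otimes> f h \<otimes> u \<in> H" if h: "h \<in> H" for h
  proof -
    have ch: "c h \<in> carrier G" using cV'[OF h] VG by auto
    have ph: "\<phi> h \<in> carrier G" using pH'[OF h] HG by simp
    have uc: "u \<in> carrier G" using uV VG by simp
    have "u \<otimes> \<phi> h = c h \<otimes> (\<phi> h \<otimes> u \<otimes> inv (\<phi> h)) \<otimes> \<phi> h" using key[OF h] by simp
    also have "\<dots> = c h \<otimes> \<phi> h \<otimes> u" using ch ph uc by (simp add: m_assoc)
    also have "\<dots> = f h \<otimes> u" using fdec[OF h] by simp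
    finally have e: "u \<otimes> \<phi> h = f h \<otimes> u" .
    have "inv u \<otimes> f h \<otimes> u = inv u \<otimes> (f h \<otimes> u)" using uc fh[OF h] by (simp add: m_assoc)
    also have "\<dots> = \<phi> h" using e[symmetric] uc ph by simp
    finally show ?thesis using pH'[OF h] by simp
  qed
  then show ?thesis using uV by blast
qed

lemma inn_inv: "v \<in> carrier G \<Longrightarrow> inv\<^bsub>AutoGroup G\<^esub> (inner_aut G v) = inner_aut G (inv v)"
proof -
  assume v: "v \<in> carrier G"
  interpret AG: group "AutoGroup G" by (rule Ag)
  show ?thesis
  proof (rule AG.inv_equality)
    show "inner_aut G (inv v) \<otimes>\<^bsub>AutoGroup G\<^esub> inner_aut G v = \<one>\<^bsub>AutoGroup G\<^esub>"
      using v by (simp add: A_mult inn_auto inn_mult inn_one A_one)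
  qed (use v inn_auto A_carrier in auto)
qed

lemma Inn_sub: "subgroup (Inn_of G V) (AutoGroup G)"
proof -
  interpret AG: group "AutoGroup G" by (rule Ag)
  show ?thesis
  proof (rule AG.subgroupI)
    show "Inn_of G V \<subseteq> carrier (AutoGroup G)"
      unfolding Inn_of_def A_carrier using inn_auto VG by auto
    show "Inn_of G V \<noteq> {}" unfolding Inn_of_def using V1 by auto
  next
    fix a assume "a \<in> Inn_of G V"
    then obtain v where v: "v \<in> V" "a = inner_aut G v" unfolding Inn_of_def by auto
    then show "inv\<^bsub>AutoGroup G\<^esub> a \<in> Inn_of G V"
      unfolding Inn_of_def using inn_inv VG Vi by auto
  next
    fix a b assume "a \<in> Inn_of G V" "b \<in> Inn_of G V"
    then obtain v w where v: "v \<in> V" "a = inner_aut G v" "w \<in> V" "b = inner_aut G w"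
      unfolding Inn_of_def by auto
    then have "a \<otimes>\<^bsub>AutoGroup G\<^esub> b = inner_aut G (v \<otimes> w)"
      using VG by (simp add: A_mult inn_auto inn_mult)
    then show "a \<otimes>\<^bsub>AutoGroup G\<^esub> b \<in> Inn_of G V" unfolding Inn_of_def using v Vm by auto
  qed
qed

lemma Inn_normal: "Inn_of G V \<lhd> AutoGroup G"
proof -
  interpret AG: group "AutoGroup G" by (rule Ag)
  have "\<forall>x\<in>carrier (AutoGroup G). \<forall>a\<in>Inn_of G V. x \<otimes>\<^bsub>AutoGroup G\<^esub> a \<otimes>\<^bsub>AutoGroup G\<^esub> inv\<^bsub>AutoGroup G\<^esub> x \<in> Inn_of G V"
  proof (intro ballI)
    fix f a assume f: "f \<in> carrier (AutoGroup G)" and a: "a \<in> Inn_of G V"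
    then obtain v where v: "v \<in> V" "a = inner_aut G v" unfolding Inn_of_def by auto
    have fa: "f \<in> auto G" using f A_carrier by simp
    have fv: "f v \<in> V" using auto_V[OF fa v(1)] .
    have i1: "inner_aut G v \<in> carrier (AutoGroup G)" "inner_aut G (f v) \<in> carrier (AutoGroup G)"
      using inn_auto VG v fv A_carrier by auto
    have "f \<otimes>\<^bsub>AutoGroup G\<^esub> a = inner_aut G (f v) \<otimes>\<^bsub>AutoGroup G\<^esub> f"
      using v fa i1 VG auto_conj[OF fa, of v] by (simp add: A_mult A_carrier)
    then have "f \<otimes>\<^bsub>AutoGroup G\<^esub> a \<otimes>\<^bsub>AutoGroup G\<^esub> inv\<^bsub>AutoGroup G\<^esub> f = inner_aut G (f v)"
      using f i1 by (simp add: AG.m_assoc)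
    then show "f \<otimes>\<^bsub>AutoGroup G\<^esub> a \<otimes>\<^bsub>AutoGroup G\<^esub> inv\<^bsub>AutoGroup G\<^esub> f \<in> Inn_of G V"
      unfolding Inn_of_def using fv by auto
  qed
  then show ?thesis using Inn_sub by (simp add: AG.normal_inv_iff)
qed

lemma idN: "(\<lambda>x\<in>carrier G. x) \<in> aut_normalizer G H"
proof -
  have idH: "(\<lambda>x\<in>carrier G. x) ` H = H" using HG by auto
  show ?thesis unfolding aut_normalizer_def mem_Collect_eq using id_in_auto idH by (rule conjI)
qed

lemma N_sub: "subgroup (aut_normalizer G H) (AutoGroup G)"
proof -
  interpret AG: group "AutoGroup G" by (rule Ag)
  show ?thesis
  proof (rule AG.subgroupI)
    show "aut_normalizer G H \<subseteq> carrier (AutoGroup G)"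
      unfolding aut_normalizer_def A_carrier by auto
    show "aut_normalizer G H \<noteq> {}" using idN by auto
  next
    fix f assume "f \<in> aut_normalizer G H"
    then have f: "f \<in> auto G" "f ` H = H" unfolding aut_normalizer_def by auto
    define f' where "f' = inv\<^bsub>AutoGroup G\<^esub> f"
    have f'a: "f' \<in> auto G" unfolding f'_def using f AG.inv_closed A_carrier by auto
    have ff: "f' \<otimes>\<^bsub>AutoGroup G\<^esub> f = (\<lambda>x\<in>carrier G. x)"
      unfolding f'_def using f AG.l_inv A_carrier A_one by auto
    have sub: "f' ` H \<subseteq> H"
    proof
      fix y assume "y \<in> f' ` H"
      then obtain h where h: "h \<in> H" "y = f' h" by auto
      have "h \<in> f ` H" using f(2) h(1) by simp
      then obtain h0 where h0: "h0 \<in> H" "h = f h0" by (rule imageE) simp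
      have "compose (carrier G) f' f h0 = h0" using ff f'a f(1) h0 HG by (simp add: A_mult)
      then have "f' h = h0" using h0 HG by (simp add: compose_def)
      then show "y \<in> H" using h h0 by simp
    qed
    have "inj_on f' H" using auto_inj[OF f'a] HG by (meson inj_on_subset subsetI)
    then have "f' ` H = H" using endo_inj_surj[OF finH sub] by simp
    then show "inv\<^bsub>AutoGroup G\<^esub> f \<in> aut_normalizer G H"
      unfolding aut_normalizer_def using f'a f'_def by simp
  next
    fix f g assume "f \<in> aut_normalizer G H" "g \<in> aut_normalizer G H"
    then have f: "f \<in> auto G" "f ` H = H" "g \<in> auto G" "g ` H = H" unfolding aut_normalizer_def by auto
    have "compose (carrier G) f g ` H = f ` (g ` H)" using HG by (auto simp: compose_def)
    then have "compose (carrier G) f g ` H = H" using f by simp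
    moreover have "compose (carrier G) f g \<in> auto G"
      using AG.m_closed[of f g] f by (simp add: A_carrier A_mult)
    ultimately show "f \<otimes>\<^bsub>AutoGroup G\<^esub> g \<in> aut_normalizer G H"
      unfolding aut_normalizer_def using f by (simp add: A_mult)
  qed
qed

lemma centr:
  assumes z: "z \<in> V" and hz: "\<And>h. h \<in> H \<Longrightarrow> z \<otimes> h \<otimes> inv z = h"
  shows "z = \<one>"
proof (rule cent[OF z])
  fix h assume h: "h \<in> H"
  have zc: "z \<in> carrier G" using z VG by simp
  have hc: "h \<in> carrier G" using h HG by simp
  have "z \<otimes> h = z \<otimes> h \<otimes> inv z \<otimes> z" using zc hc by (simp add: m_assoc)
  also have "\<dots> = h \<otimes> z" using hz[OF h] by simp
  finally show "z \<otimes> h = h \<otimes> z" .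
qed

lemma centr2:
  assumes z: "z \<in> V" and hz: "\<And>h. h \<in> H \<Longrightarrow> z \<otimes> h \<otimes> inv z \<in> H"
  shows "z = \<one>"
proof (rule centr[OF z])
  fix h assume h: "h \<in> H"
  have zc: "z \<in> carrier G" using z VG by simp
  have hc: "h \<in> carrier G" using h HG by simp
  define x where "x = z \<otimes> h \<otimes> inv z \<otimes> inv h"
  have "x \<in> H" unfolding x_def using hz[OF h] h Hm Hi by simp
  moreover have "x = z \<otimes> (h \<otimes> inv z \<otimes> inv h)" unfolding x_def using zc hc by (simp add: m_assoc)
  then have "x \<in> V" using Vm[OF z Vconj[OF hc Vi[OF z]]] by simp
  ultimately have "x = \<one>" using VH by auto
  then have "z \<otimes> h \<otimes> inv z \<otimes> inv h \<otimes> h = h" unfolding x_def using hc by simp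
  then show "z \<otimes> h \<otimes> inv z = h" using zc hc by (simp add: m_assoc)
qed

lemma Inn_N_inter: "Inn_of G V \<inter> aut_normalizer G H = {\<one>\<^bsub>AutoGroup G\<^esub>}"
proof
  show "Inn_of G V \<inter> aut_normalizer G H \<subseteq> {\<one>\<^bsub>AutoGroup G\<^esub>}"
  proof
    fix a assume "a \<in> Inn_of G V \<inter> aut_normalizer G H"
    then obtain v where v: "v \<in> V" "a = inner_aut G v" "inner_aut G v ` H = H"
      unfolding Inn_of_def aut_normalizer_def by auto
    have "v \<otimes> h \<otimes> inv v \<in> H" if h: "h \<in> H" for h
    proof -
      have "inner_aut G v h \<in> H" using v(3) h by (metis image_eqI)
      then show ?thesis using HG[OF h] by (simp add: inn_apply)
    qed
    then have "v = \<one>" by (rule centr2[OF v(1)])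
    then show "a \<in> {\<one>\<^bsub>AutoGroup G\<^esub>}" using v by (simp add: inn_one A_one)
  qed
  have "(\<lambda>x\<in>carrier G. x) \<in> Inn_of G V" unfolding Inn_of_def using V1 inn_one by (metis image_eqI)
  then show "{\<one>\<^bsub>AutoGroup G\<^esub>} \<subseteq> Inn_of G V \<inter> aut_normalizer G H"
    using idN A_one by simp
qed

lemma Inn_N_prod: "Inn_of G V <#>\<^bsub>AutoGroup G\<^esub> aut_normalizer G H = carrier (AutoGroup G)"
proof
  interpret AG: group "AutoGroup G" by (rule Ag)
  show "Inn_of G V <#>\<^bsub>AutoGroup G\<^esub> aut_normalizer G H \<subseteq> carrier (AutoGroup G)"
    using subgroup.subset[OF Inn_sub] subgroup.subset[OF N_sub]
    unfolding set_mult_def by auto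
  show "carrier (AutoGroup G) \<subseteq> Inn_of G V <#>\<^bsub>AutoGroup G\<^esub> aut_normalizer G H"
  proof
    fix f assume fA: "f \<in> carrier (AutoGroup G)"
    then have f: "f \<in> auto G" using A_carrier by simp
    obtain u where u: "u \<in> V" "\<And>h. h \<in> H \<Longrightarrow> inv u \<otimes> f h \<otimes> u \<in> H" using cocycle_conj[OF f] by blast
    have uc: "u \<in> carrier G" using u VG by simp
    have iu: "inner_aut G u \<in> carrier (AutoGroup G)" "inner_aut G (inv u) \<in> carrier (AutoGroup G)"
      using inn_auto uc A_carrier by auto
    define f' where "f' = inner_aut G (inv u) \<otimes>\<^bsub>AutoGroup G\<^esub> f"
    have f'a: "f' \<in> auto G" unfolding f'_def using iu fA AG.m_closed A_carrier by simp
    have f'h: "f' h = inv u \<otimes> f h \<otimes> u" if h: "h \<in> H" for h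
      unfolding f'_def using iu fA h HG uc auto_carrier[OF f]
      by (simp add: A_mult A_carrier compose_def inn_apply)
    have sub: "f' ` H \<subseteq> H" using f'h u(2) by auto
    have "inj_on f' H" using auto_inj[OF f'a] HG by (meson inj_on_subset subsetI)
    then have "f' ` H = H" using endo_inj_surj[OF finH sub] by simp
    then have f'N: "f' \<in> aut_normalizer G H" unfolding aut_normalizer_def using f'a by simp
    have "inner_aut G u \<otimes>\<^bsub>AutoGroup G\<^esub> f' = f"
      unfolding f'_def using iu fA inn_inv[OF uc, symmetric]
      by (simp add: AG.m_assoc[symmetric])
    moreover have "inner_aut G u \<in> Inn_of G V" unfolding Inn_of_def using u by simp
    ultimately show "f \<in> Inn_of G V <#>\<^bsub>AutoGroup G\<^esub> aut_normalizer G H"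
      unfolding set_mult_def using f'N by force
  qed
qed

lemma Inn_iso: "G\<lparr>carrier := V\<rparr> \<cong> (AutoGroup G)\<lparr>carrier := Inn_of G V\<rparr>"
proof (rule is_isoI)
  show "inner_aut G \<in> iso (G\<lparr>carrier := V\<rparr>) ((AutoGroup G)\<lparr>carrier := Inn_of G V\<rparr>)"
    unfolding iso_def
  proof (intro CollectI conjI)
    show "inner_aut G \<in> hom (G\<lparr>carrier := V\<rparr>) ((AutoGroup G)\<lparr>carrier := Inn_of G V\<rparr>)"
      unfolding hom_def Inn_of_def using VG
      by (auto simp: A_mult inn_auto inn_mult)
    show "bij_betw (inner_aut G) (carrier (G\<lparr>carrier := V\<rparr>)) (carrier ((AutoGroup G)\<lparr>carrier := Inn_of G V\<rparr>))"
      unfolding bij_betw_def Inn_of_def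
    proof (simp, rule inj_onI)
      fix v w assume v: "v \<in> V" and w: "w \<in> V" and e: "inner_aut G v = inner_aut G w"
      have vc: "v \<in> carrier G" and wc: "w \<in> carrier G" using v w VG by auto
      have "inner_aut G (inv w \<otimes> v) = compose (carrier G) (inner_aut G (inv w)) (inner_aut G v)"
        using vc wc by (simp add: inn_mult)
      also have "\<dots> = inner_aut G \<one>" using e wc by (simp add: inn_mult)
      finally have e2: "inner_aut G (inv w \<otimes> v) = inner_aut G \<one>" .
      have "inv w \<otimes> v = \<one>"
      proof (rule centr)
        show "inv w \<otimes> v \<in> V" using v w Vi Vm by simp
        fix h assume h: "h \<in> H"
        have "inner_aut G (inv w \<otimes> v) h = h" using e2 HG[OF h] by (simp add: inn_one)
        then show "inv w \<otimes> v \<otimes> h \<otimes> inv (inv w \<otimes> v) = h" using HG[OF h] by (simp add: inn_apply)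
      qed
      then show "v = w" using vc wc by (metis inv_cancel2 r_one)
    qed
  qed
qed

lemma sdp_main: "internal_semidirect (AutoGroup G) (Inn_of G V) (aut_normalizer G H)
   \<and> G\<lparr>carrier := V\<rparr> \<cong> (AutoGroup G)\<lparr>carrier := Inn_of G V\<rparr>"
  unfolding internal_semidirect_def using Inn_normal N_sub Inn_N_inter Inn_N_prod Inn_iso by simp

end

locale sd = V: comm_group V + D: group D for V :: "('v, 'x) monoid_scheme" and D :: "('d, 'y) monoid_scheme" +
  fixes \<psi> :: "'d \<Rightarrow> 'v \<Rightarrow> 'v" and p :: nat
  assumes hom: "\<psi> \<in> hom D (AutoGroup V)"
  and Vp: "\<And>v. v \<in> carrier V \<Longrightarrow> v [^]\<^bsub>V\<^esub> p = \<one>\<^bsub>V\<^esub>"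
  and finD: "finite (carrier D)"
  and copD: "coprime p (card (carrier D))"
  and fixd: "\<And>v. v \<in> carrier V \<Longrightarrow> (\<And>g. g \<in> carrier D \<Longrightarrow> \<psi> g v = v) \<Longrightarrow> v = \<one>\<^bsub>V\<^esub>"
begin

abbreviation "SG \<equiv> semidirect V D \<psi>"

lemma psi_auto: "g \<in> carrier D \<Longrightarrow> \<psi> g \<in> auto V"
  using hom_in_carrier[OF hom] by (simp add: AutoGroup_def)
lemma psi_hom: "g \<in> carrier D \<Longrightarrow> \<psi> g \<in> hom V V"
  using psi_auto by (simp add: auto_def)
lemma psi_car: "g \<in> carrier D \<Longrightarrow> w \<in> carrier V \<Longrightarrow> \<psi> g w \<in> carrier V"
  by (rule hom_in_carrier[OF psi_hom])
lemma psi_mult: "g \<in> carrier D \<Longrightarrow> h \<in> carrier D \<Longrightarrow> w \<in> carrier V \<Longrightarrow> \<psi> (g \<otimes>\<^bsub>D\<^esub> h) w = \<psi> g (\<psi> h w)"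
proof -
  assume g: "g \<in> carrier D" and h: "h \<in> carrier D" and w: "w \<in> carrier V"
  have "\<psi> (g \<otimes>\<^bsub>D\<^esub> h) = \<psi> g \<otimes>\<^bsub>AutoGroup V\<^esub> \<psi> h" by (rule hom_mult[OF hom g h])
  also have "\<dots> = compose (carrier V) (\<psi> g) (\<psi> h)"
    using psi_auto[OF g] psi_auto[OF h] by (simp add: AutoGroup_def BijGroup_def auto_def)
  finally show ?thesis using w by (simp add: compose_def)
qed
lemma psi_one: "w \<in> carrier V \<Longrightarrow> \<psi> \<one>\<^bsub>D\<^esub> w = w"
proof -
  assume w: "w \<in> carrier V"
  have "\<psi> \<one>\<^bsub>D\<^esub> = \<one>\<^bsub>AutoGroup V\<^esub>" by (rule hom_one[OF hom D.is_group V.AutoGroup])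
  then show ?thesis using w by (simp add: AutoGroup_def BijGroup_def)
qed
lemma psi_vm: "g \<in> carrier D \<Longrightarrow> v \<in> carrier V \<Longrightarrow> w \<in> carrier V \<Longrightarrow> \<psi> g (v \<otimes>\<^bsub>V\<^esub> w) = \<psi> g v \<otimes>\<^bsub>V\<^esub> \<psi> g w"
  by (rule hom_mult[OF psi_hom])
lemma psi_v1: "g \<in> carrier D \<Longrightarrow> \<psi> g \<one>\<^bsub>V\<^esub> = \<one>\<^bsub>V\<^esub>"
  by (rule hom_one[OF psi_hom V.is_group V.is_group])

lemma SG_carrier: "carrier SG = carrier V \<times> carrier D" by (simp add: semidirect_def)
lemma SG_mult: "(v, g) \<otimes>\<^bsub>SG\<^esub> (w, h) = (v \<otimes>\<^bsub>V\<^esub> \<psi> g w, g \<otimes>\<^bsub>D\<^esub> h)" by (simp add: semidirect_def)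
lemma SG_one: "\<one>\<^bsub>SG\<^esub> = (\<one>\<^bsub>V\<^esub>, \<one>\<^bsub>D\<^esub>)" by (simp add: semidirect_def)

lemma SG_group: "group SG"
proof (rule groupI)
  fix x y assume "x \<in> carrier SG" "y \<in> carrier SG"
  then show "x \<otimes>\<^bsub>SG\<^esub> y \<in> carrier SG"
    by (cases x; cases y) (auto simp: SG_carrier SG_mult psi_car)
next
  show "\<one>\<^bsub>SG\<^esub> \<in> carrier SG" by (simp add: SG_carrier SG_one)
next
  fix x y z assume "x \<in> carrier SG" "y \<in> carrier SG" "z \<in> carrier SG"
  then show "x \<otimes>\<^bsub>SG\<^esub> y \<otimes>\<^bsub>SG\<^esub> z = x \<otimes>\<^bsub>SG\<^esub> (y \<otimes>\<^bsub>SG\<^esub> z)"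
    by (cases x; cases y; cases z) (simp add: SG_carrier SG_mult psi_car psi_mult psi_vm V.m_assoc D.m_assoc)
next
  fix x assume "x \<in> carrier SG"
  then show "\<one>\<^bsub>SG\<^esub> \<otimes>\<^bsub>SG\<^esub> x = x"
    by (cases x) (simp add: SG_carrier SG_mult SG_one psi_one)
next
  fix x assume "x \<in> carrier SG"
  then obtain v g where x: "x = (v, g)" "v \<in> carrier V" "g \<in> carrier D" by (cases x) (auto simp: SG_carrier)
  have "(\<psi> (inv\<^bsub>D\<^esub> g) (inv\<^bsub>V\<^esub> v), inv\<^bsub>D\<^esub> g) \<otimes>\<^bsub>SG\<^esub> x = \<one>\<^bsub>SG\<^esub>"
    using x by (simp add: SG_mult SG_one psi_vm[symmetric] psi_v1)
  moreover have "(\<psi> (inv\<^bsub>D\<^esub> g) (inv\<^bsub>V\<^esub> v), inv\<^bsub>D\<^esub> g) \<in> carrier SG"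
    using x by (simp add: SG_carrier psi_car)
  ultimately show "\<exists>y\<in>carrier SG. y \<otimes>\<^bsub>SG\<^esub> x = \<one>\<^bsub>SG\<^esub>" by blast
qed


lemma SG_inv: "v \<in> carrier V \<Longrightarrow> g \<in> carrier D \<Longrightarrow> inv\<^bsub>SG\<^esub> (v, g) = (\<psi> (inv\<^bsub>D\<^esub> g) (inv\<^bsub>V\<^esub> v), inv\<^bsub>D\<^esub> g)"
  by (rule group.inv_equality[OF SG_group])
     (simp_all add: SG_carrier SG_mult SG_one psi_vm[symmetric] psi_v1 psi_car)

lemma SG_snd: "x \<in> carrier SG \<Longrightarrow> y \<in> carrier SG \<Longrightarrow> snd (x \<otimes>\<^bsub>SG\<^esub> y) = snd x \<otimes>\<^bsub>D\<^esub> snd y"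
  by (cases x; cases y) (simp add: SG_mult)

lemma SG_Vpow: "v \<in> carrier V \<Longrightarrow> (v, \<one>\<^bsub>D\<^esub>) [^]\<^bsub>SG\<^esub> (n::nat) = (v [^]\<^bsub>V\<^esub> n, \<one>\<^bsub>D\<^esub>)"
  by (induction n) (simp_all add: SG_one SG_mult psi_one)

lemma sdp_inst: "sdp SG (carrier V \<times> {\<one>\<^bsub>D\<^esub>}) ({\<one>\<^bsub>V\<^esub>} \<times> carrier D) p"
proof -
  interpret SGg: group SG by (rule SG_group)
  have Vsub: "subgroup (carrier V \<times> {\<one>\<^bsub>D\<^esub>}) SG"
  proof (rule SGg.subgroupI)
    show "carrier V \<times> {\<one>\<^bsub>D\<^esub>} \<subseteq> carrier SG" by (auto simp: SG_carrier)
    show "carrier V \<times> {\<one>\<^bsub>D\<^esub>} \<noteq> {}" by auto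
  next
    fix a assume "a \<in> carrier V \<times> {\<one>\<^bsub>D\<^esub>}"
    then show "inv\<^bsub>SG\<^esub> a \<in> carrier V \<times> {\<one>\<^bsub>D\<^esub>}" by (auto simp: SG_inv psi_one)
  next
    fix a b assume "a \<in> carrier V \<times> {\<one>\<^bsub>D\<^esub>}" "b \<in> carrier V \<times> {\<one>\<^bsub>D\<^esub>}"
    then show "a \<otimes>\<^bsub>SG\<^esub> b \<in> carrier V \<times> {\<one>\<^bsub>D\<^esub>}" by (auto simp: SG_mult psi_one)
  qed
  show ?thesis
  proof (intro sdp.intro sdp_axioms.intro)
    show "group SG" by (rule SG_group)
  next
    show "finite ({\<one>\<^bsub>V\<^esub>} \<times> carrier D)" using finD by simp
  next
    have "\<forall>x\<in>carrier SG. \<forall>h\<in>carrier V \<times> {\<one>\<^bsub>D\<^esub>}. x \<otimes>\<^bsub>SG\<^esub> h \<otimes>\<^bsub>SG\<^esub> inv\<^bsub>SG\<^esub> x \<in> carrier V \<times> {\<one>\<^bsub>D\<^esub>}"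
    proof (intro ballI)
      fix x h assume x: "x \<in> carrier SG" and h: "h \<in> carrier V \<times> {\<one>\<^bsub>D\<^esub>}"
      have hc: "h \<in> carrier SG" using h by (auto simp: SG_carrier)
      have z: "x \<otimes>\<^bsub>SG\<^esub> h \<otimes>\<^bsub>SG\<^esub> inv\<^bsub>SG\<^esub> x \<in> carrier SG" using x hc by simp
      have sx: "snd x \<in> carrier D" using x by (auto simp: SG_carrier)
      have si: "snd (inv\<^bsub>SG\<^esub> x) = inv\<^bsub>D\<^esub> snd x" using x by (cases x) (simp add: SG_carrier SG_inv)
      have "snd (x \<otimes>\<^bsub>SG\<^esub> h \<otimes>\<^bsub>SG\<^esub> inv\<^bsub>SG\<^esub> x) = snd x \<otimes>\<^bsub>D\<^esub> snd h \<otimes>\<^bsub>D\<^esub> inv\<^bsub>D\<^esub> snd x"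
        using x hc si by (simp add: SG_snd)
      also have "\<dots> = \<one>\<^bsub>D\<^esub>" using h sx by auto
      finally show "x \<otimes>\<^bsub>SG\<^esub> h \<otimes>\<^bsub>SG\<^esub> inv\<^bsub>SG\<^esub> x \<in> carrier V \<times> {\<one>\<^bsub>D\<^esub>}"
        using z by (cases "x \<otimes>\<^bsub>SG\<^esub> h \<otimes>\<^bsub>SG\<^esub> inv\<^bsub>SG\<^esub> x") (auto simp: SG_carrier)
    qed
    then show "carrier V \<times> {\<one>\<^bsub>D\<^esub>} \<lhd> SG" using Vsub by (simp add: SGg.normal_inv_iff)
  next
    fix x y assume "x \<in> carrier V \<times> {\<one>\<^bsub>D\<^esub>}" "y \<in> carrier V \<times> {\<one>\<^bsub>D\<^esub>}"
    then show "x \<otimes>\<^bsub>SG\<^esub> y = y \<otimes>\<^bsub>SG\<^esub> x" by (auto simp: SG_mult psi_one V.m_comm)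
  next
    fix x assume "x \<in> carrier V \<times> {\<one>\<^bsub>D\<^esub>}"
    then show "x [^]\<^bsub>SG\<^esub> p = \<one>\<^bsub>SG\<^esub>" by (auto simp: SG_Vpow Vp SG_one)
  next
    show "subgroup ({\<one>\<^bsub>V\<^esub>} \<times> carrier D) SG"
    proof (rule SGg.subgroupI)
      show "{\<one>\<^bsub>V\<^esub>} \<times> carrier D \<subseteq> carrier SG" by (auto simp: SG_carrier)
      show "{\<one>\<^bsub>V\<^esub>} \<times> carrier D \<noteq> {}" by auto
    next
      fix a assume "a \<in> {\<one>\<^bsub>V\<^esub>} \<times> carrier D"
      then show "inv\<^bsub>SG\<^esub> a \<in> {\<one>\<^bsub>V\<^esub>} \<times> carrier D" by (auto simp: SG_inv psi_v1)
    next
      fix a b assume "a \<in> {\<one>\<^bsub>V\<^esub>} \<times> carrier D" "b \<in> {\<one>\<^bsub>V\<^esub>} \<times> carrier D"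
      then show "a \<otimes>\<^bsub>SG\<^esub> b \<in> {\<one>\<^bsub>V\<^esub>} \<times> carrier D" by (auto simp: SG_mult psi_v1)
    qed
  next
    show "(carrier V \<times> {\<one>\<^bsub>D\<^esub>}) \<inter> ({\<one>\<^bsub>V\<^esub>} \<times> carrier D) = {\<one>\<^bsub>SG\<^esub>}" by (auto simp: SG_one)
  next
    show "(carrier V \<times> {\<one>\<^bsub>D\<^esub>}) <#>\<^bsub>SG\<^esub> ({\<one>\<^bsub>V\<^esub>} \<times> carrier D) = carrier SG"
    proof
      show "(carrier V \<times> {\<one>\<^bsub>D\<^esub>}) <#>\<^bsub>SG\<^esub> ({\<one>\<^bsub>V\<^esub>} \<times> carrier D) \<subseteq> carrier SG"
        unfolding set_mult_def by (auto simp: SG_carrier SG_mult psi_one)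
      show "carrier SG \<subseteq> (carrier V \<times> {\<one>\<^bsub>D\<^esub>}) <#>\<^bsub>SG\<^esub> ({\<one>\<^bsub>V\<^esub>} \<times> carrier D)"
      proof
        fix x assume "x \<in> carrier SG"
        then obtain v g where x: "x = (v, g)" "v \<in> carrier V" "g \<in> carrier D" by (cases x) (auto simp: SG_carrier)
        have "x = (v, \<one>\<^bsub>D\<^esub>) \<otimes>\<^bsub>SG\<^esub> (\<one>\<^bsub>V\<^esub>, g)" using x by (simp add: SG_mult psi_one)
        then show "x \<in> (carrier V \<times> {\<one>\<^bsub>D\<^esub>}) <#>\<^bsub>SG\<^esub> ({\<one>\<^bsub>V\<^esub>} \<times> carrier D)"
          unfolding set_mult_def using x by blast
      qed
    qed
  next
    have "card ({\<one>\<^bsub>V\<^esub>} \<times> carrier D) = card (carrier D)" by (simp add: card_cartesian_product)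
    then show "coprime p (card ({\<one>\<^bsub>V\<^esub>} \<times> carrier D))" using copD by simp
  next
    fix x assume x: "x \<in> carrier V \<times> {\<one>\<^bsub>D\<^esub>}"
      and c: "\<And>h. h \<in> {\<one>\<^bsub>V\<^esub>} \<times> carrier D \<Longrightarrow> x \<otimes>\<^bsub>SG\<^esub> h = h \<otimes>\<^bsub>SG\<^esub> x"
    then obtain v where v: "x = (v, \<one>\<^bsub>D\<^esub>)" "v \<in> carrier V" by auto
    have "\<psi> g v = v" if g: "g \<in> carrier D" for g
    proof -
      have "x \<otimes>\<^bsub>SG\<^esub> (\<one>\<^bsub>V\<^esub>, g) = (\<one>\<^bsub>V\<^esub>, g) \<otimes>\<^bsub>SG\<^esub> x" using c g by simp
      then show ?thesis using v g by (simp add: SG_mult psi_one psi_car)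
    qed
    then have "v = \<one>\<^bsub>V\<^esub>" using fixd v(2) by blast
    then show "x = \<one>\<^bsub>SG\<^esub>" using v by (simp add: SG_one)
  qed
qed

lemma sd_main: "internal_semidirect (AutoGroup SG) (Inn_of SG (carrier V \<times> {\<one>\<^bsub>D\<^esub>})) (aut_normalizer SG ({\<one>\<^bsub>V\<^esub>} \<times> carrier D))
   \<and> V \<cong> (AutoGroup SG)\<lparr>carrier := Inn_of SG (carrier V \<times> {\<one>\<^bsub>D\<^esub>})\<rparr>"
proof -
  interpret S: sdp SG "carrier V \<times> {\<one>\<^bsub>D\<^esub>}" "{\<one>\<^bsub>V\<^esub>} \<times> carrier D" p by (rule sdp_inst)
  have "V \<cong> SG\<lparr>carrier := carrier V \<times> {\<one>\<^bsub>D\<^esub>}\<rparr>"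
  proof (rule is_isoI)
    show "(\<lambda>v. (v, \<one>\<^bsub>D\<^esub>)) \<in> iso V (SG\<lparr>carrier := carrier V \<times> {\<one>\<^bsub>D\<^esub>}\<rparr>)"
      unfolding iso_def hom_def bij_betw_def
      by (auto simp: SG_mult psi_one inj_on_def)
  qed
  then show ?thesis using S.sdp_main iso_trans by blast
qed
end


lemma Zp_comm_group: assumes p: "p > 0" shows "comm_group (Zp_vec p d)"
proof (rule comm_groupI)
  fix x y assume "x \<in> carrier (Zp_vec p d)" "y \<in> carrier (Zp_vec p d)"
  then show "x \<otimes>\<^bsub>Zp_vec p d\<^esub> y \<in> carrier (Zp_vec p d)"
    using p by (simp add: Zp_vec_def)
next
  show "\<one>\<^bsub>Zp_vec p d\<^esub> \<in> carrier (Zp_vec p d)" using p by (simp add: Zp_vec_def)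
next
  fix x y z
  show "x \<otimes>\<^bsub>Zp_vec p d\<^esub> y \<otimes>\<^bsub>Zp_vec p d\<^esub> z = x \<otimes>\<^bsub>Zp_vec p d\<^esub> (y \<otimes>\<^bsub>Zp_vec p d\<^esub> z)"
    by (simp add: Zp_vec_def mod_simps add.assoc)
next
  fix x y
  show "x \<otimes>\<^bsub>Zp_vec p d\<^esub> y = y \<otimes>\<^bsub>Zp_vec p d\<^esub> x"
    by (simp add: Zp_vec_def add.commute)
next
  fix x assume x: "x \<in> carrier (Zp_vec p d)"
  show "\<one>\<^bsub>Zp_vec p d\<^esub> \<otimes>\<^bsub>Zp_vec p d\<^esub> x = x"
  proof (rule ext)
    fix i show "(\<one>\<^bsub>Zp_vec p d\<^esub> \<otimes>\<^bsub>Zp_vec p d\<^esub> x) i = x i"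
      using x by (cases "i < d") (simp_all add: Zp_vec_def)
  qed
next
  fix x assume x: "x \<in> carrier (Zp_vec p d)"
  have "(\<lambda>i. (- x i) mod int p) \<otimes>\<^bsub>Zp_vec p d\<^esub> x = \<one>\<^bsub>Zp_vec p d\<^esub>"
    by (simp add: Zp_vec_def mod_simps)
  moreover have "(\<lambda>i. (- x i) mod int p) \<in> carrier (Zp_vec p d)"
    using x p by (simp add: Zp_vec_def)
  ultimately show "\<exists>y\<in>carrier (Zp_vec p d). y \<otimes>\<^bsub>Zp_vec p d\<^esub> x = \<one>\<^bsub>Zp_vec p d\<^esub>" by blast
qed

lemma Zp_pow: "v [^]\<^bsub>Zp_vec p d\<^esub> (n::nat) = (\<lambda>i. (int n * v i) mod int p)"
  by (induction n) (simp_all add: Zp_vec_def mod_simps algebra_simps)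

lemma Zp_p: "v [^]\<^bsub>Zp_vec p d\<^esub> p = \<one>\<^bsub>Zp_vec p d\<^esub>"
  unfolding Zp_pow by (simp add: Zp_vec_def)

lemma dih_group: assumes r: "r > 0" shows "group (dihedral_group r)"
proof (rule groupI)
  fix x y assume "x \<in> carrier (dihedral_group r)" "y \<in> carrier (dihedral_group r)"
  then show "x \<otimes>\<^bsub>dihedral_group r\<^esub> y \<in> carrier (dihedral_group r)"
    using r by (cases x; cases y) (simp add: dihedral_group_def)
next
  show "\<one>\<^bsub>dihedral_group r\<^esub> \<in> carrier (dihedral_group r)" using r by (simp add: dihedral_group_def)
next
  fix x y z
  show "x \<otimes>\<^bsub>dihedral_group r\<^esub> y \<otimes>\<^bsub>dihedral_group r\<^esub> z = x \<otimes>\<^bsub>dihedral_group r\<^esub> (y \<otimes>\<^bsub>dihedral_group r\<^esub> z)"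
  proof (cases x; cases y; cases z)
    fix a s b t c u assume e: "x = (a, s)" "y = (b, t)" "z = (c, u)"
    show ?thesis unfolding e
      by (cases s; cases t; cases u) (simp_all add: dihedral_group_def mod_simps algebra_simps)
  qed
next
  fix x assume "x \<in> carrier (dihedral_group r)"
  then show "\<one>\<^bsub>dihedral_group r\<^esub> \<otimes>\<^bsub>dihedral_group r\<^esub> x = x"
    by (cases x) (simp add: dihedral_group_def)
next
  fix x assume x: "x \<in> carrier (dihedral_group r)"
  then obtain a s where e: "x = (a, s)" "0 \<le> a" "a < int r" by (cases x) (auto simp: dihedral_group_def)
  show "\<exists>y\<in>carrier (dihedral_group r). y \<otimes>\<^bsub>dihedral_group r\<^esub> x = \<one>\<^bsub>dihedral_group r\<^esub>"
  proof (cases s)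
    case True
    then show ?thesis using e by (intro bexI[of _ "(a, True)"]) (simp_all add: dihedral_group_def)
  next
    case False
    then show ?thesis using e r by (intro bexI[of _ "((- a) mod int r, False)"]) (simp_all add: dihedral_group_def mod_simps)
  qed
qed

lemma dih_card: "card (carrier (dihedral_group r)) = 2 * r"
  by (simp add: dihedral_group_def card_cartesian_product)

lemma dih_fin: "finite (carrier (dihedral_group r))"
  by (simp add: dihedral_group_def)


lemma fix_from_irred:
  assumes gV: "group V" and gD: "group D" and hom: "\<psi> \<in> hom D (AutoGroup V)"
    and irr: "irreducible_rep D V \<psi>" and nt: "nontrivial_rep D V \<psi>"
    and v: "v \<in> carrier V" and fx: "\<And>g. g \<in> carrier D \<Longrightarrow> \<psi> g v = v"
  shows "v = \<one>\<^bsub>V\<^esub>"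
proof -
  have pa: "\<psi> g \<in> auto V" if "g \<in> carrier D" for g
    using hom_in_carrier[OF hom that] by (simp add: AutoGroup_def)
  have ph: "\<psi> g \<in> hom V V" if "g \<in> carrier D" for g using pa[OF that] by (simp add: auto_def)
  have gh: "group_hom V V (\<psi> g)" if "g \<in> carrier D" for g
    unfolding group_hom_def group_hom_axioms_def using gV ph[OF that] by simp
  define W where "W = {w \<in> carrier V. \<forall>g\<in>carrier D. \<psi> g w = w}"
  have sub: "subgroup W V"
  proof (rule group.subgroupI[OF gV])
    show "W \<subseteq> carrier V" unfolding W_def by auto
    have "\<one>\<^bsub>V\<^esub> \<in> W" unfolding W_def using group_hom.hom_one[OF gh] group.is_monoid[OF gV] by simp
    then show "W \<noteq> {}" by auto
  next
    fix a assume "a \<in> W"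
    then show "inv\<^bsub>V\<^esub> a \<in> W" unfolding W_def using group_hom.hom_inv[OF gh] group.inv_closed[OF gV] by simp
  next
    fix a b assume "a \<in> W" "b \<in> W"
    then show "a \<otimes>\<^bsub>V\<^esub> b \<in> W" unfolding W_def using hom_mult[OF ph] monoid.m_closed[OF group.is_monoid[OF gV]] by simp
  qed
  have inv: "\<forall>g\<in>carrier D. \<psi> g ` W \<subseteq> W" unfolding W_def by auto
  have "W = {\<one>\<^bsub>V\<^esub>} \<or> W = carrier V" using irr sub inv unfolding irreducible_rep_def by blast
  moreover have "W \<noteq> carrier V"
  proof
    assume WV: "W = carrier V"
    obtain g where g: "g \<in> carrier D" "\<psi> g \<noteq> \<one>\<^bsub>AutoGroup V\<^esub>" using nt unfolding nontrivial_rep_def by blast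
    have "\<psi> g = (\<lambda>x\<in>carrier V. x)"
    proof (rule ext)
      fix x show "\<psi> g x = (\<lambda>x\<in>carrier V. x) x"
      proof (cases "x \<in> carrier V")
        case True then show ?thesis using WV g(1) unfolding W_def by auto
      next
        case False
        have "\<psi> g \<in> extensional (carrier V)" using pa[OF g(1)] by (simp add: auto_def Bij_def)
        then show ?thesis using False by (simp add: extensional_def)
      qed
    qed
    then show False using g(2) by (simp add: AutoGroup_def BijGroup_def)
  qed
  ultimately have "W = {\<one>\<^bsub>V\<^esub>}" by simp
  moreover have "v \<in> W" unfolding W_def using v fx by simp
  ultimately show ?thesis by simp
qed

theorem lemma5p1:
  fixes p r d :: nat and \<psi> :: "int \<times> bool \<Rightarrow> (nat \<Rightarrow> int) \<Rightarrow> (nat \<Rightarrow> int)"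
  assumes "prime p" and "odd p" and "r \<ge> 3" and "\<not> p dvd r"
    and "\<psi> \<in> hom (dihedral_group r) (AutoGroup (Zp_vec p d))"
    and "irreducible_rep (dihedral_group r) (Zp_vec p d) \<psi>"
    and "nontrivial_rep (dihedral_group r) (Zp_vec p d) \<psi>"
  shows "internal_semidirect (AutoGroup (semidirect (Zp_vec p d) (dihedral_group r) \<psi>))
           (Inn_of (semidirect (Zp_vec p d) (dihedral_group r) \<psi>) (carrier (Zp_vec p d) \<times> {(0, False)}))
           (aut_normalizer (semidirect (Zp_vec p d) (dihedral_group r) \<psi>) ({\<lambda>i. 0} \<times> carrier (dihedral_group r)))
       \<and> Zp_vec p d \<cong> (AutoGroup (semidirect (Zp_vec p d) (dihedral_group r) \<psi>))
           \<lparr>carrier := Inn_of (semidirect (Zp_vec p d) (dihedral_group r) \<psi>) (carrier (Zp_vec p d) \<times> {(0, False)})\<rparr>"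
  proof -
  have p0: "p > 0" using assms(1) prime_gt_0_nat by blast
  have r0: "r > 0" using assms(3) by simp
  have cV: "comm_group (Zp_vec p d)" by (rule Zp_comm_group[OF p0])
  have gD: "group (dihedral_group r)" by (rule dih_group[OF r0])
  have cop: "coprime p (card (carrier (dihedral_group r)))"
  proof -
    have "\<not> p dvd 2"
    proof
      assume "p dvd 2"
      then have "p \<le> 2" by (simp add: dvd_imp_le)
      moreover have "p \<ge> 2" using assms(1) prime_ge_2_nat by blast
      ultimately have "p = 2" by simp
      then show False using assms(2) by simp
    qed
    then have "\<not> p dvd 2 * r" using assms(1,4) prime_dvd_mult_iff by blast
    then have "coprime p (2 * r)" by (rule prime_imp_coprime[OF assms(1)])
    then show ?thesis by (simp only: dih_card)
  qed
  have S: "sd (Zp_vec p d) (dihedral_group r) \<psi> p"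
    unfolding sd_def sd_axioms_def
  proof (intro conjI)
    show "comm_group (Zp_vec p d)" by (rule cV)
    show "group (dihedral_group r)" by (rule gD)
    show "\<psi> \<in> hom (dihedral_group r) (AutoGroup (Zp_vec p d))" by (rule assms(5))
    show "\<forall>v. v \<in> carrier (Zp_vec p d) \<longrightarrow> v [^]\<^bsub>Zp_vec p d\<^esub> p = \<one>\<^bsub>Zp_vec p d\<^esub>" using Zp_p by blast
    show "finite (carrier (dihedral_group r))" by (rule dih_fin)
    show "coprime p (card (carrier (dihedral_group r)))" by (rule cop)
    show "\<forall>v. v \<in> carrier (Zp_vec p d) \<longrightarrow> (\<forall>g. g \<in> carrier (dihedral_group r) \<longrightarrow> \<psi> g v = v) \<longrightarrow> v = \<one>\<^bsub>Zp_vec p d\<^esub>"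
      using fix_from_irred[OF comm_group.axioms(2)[OF cV] gD assms(5) assms(6) assms(7)] by blast
  qed
  have o1: "\<one>\<^bsub>dihedral_group r\<^esub> = (0, False)" by (simp add: dihedral_group_def)
  have o2: "\<one>\<^bsub>Zp_vec p d\<^esub> = (\<lambda>i. 0)" by (simp add: Zp_vec_def)
  show ?thesis using sd.sd_main[OF S] unfolding o1 o2 .
qed

end
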